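(* Let $N\ge1$, $\mu_c>0$, $0<m\le1$, $k=Tr^\alpha>0$, distances $d_1,\dots,d_N>0$, $\alpha\ge2$, and $\eta_1,\dots,\eta_N\in(0,\infty)$. Set $\lambda_{2i-1}=\frac{d_i^{-\alpha}}{\mu_c(1+\eta_i^{-1})}$, $\lambda_{2i}=\frac{d_i^{-\alpha}}{\mu_c(1+\eta_i)}$ for $i=1,\dots,N$, let $\mathbf{D}_\eta=\mathrm{diag}(\lambda_1,\dots,\lambda_{2N})$, let $\mathbf{C}_\eta$ be a $2N\times2N$ symmetric positive definite matrix with unit diagonal, and let $\hat\lambda_1,\dots,\hat\lambda_{2N}$ be the eigenvalues of $\mathbf{D}_\eta\mathbf{C}_\eta$. Define $$C_{p,\eta}=\frac{\Gamma(2N\mu_c+m)}{\Gamma(2N\mu_c+1)\Gamma(m)}\prod_{i=1}^{2N}\left(\frac{1}{km\lambda_i+1}\right)^{\mu_c}F_D^{(2N)}\!\left[1-m,\mu_c,\dots,\mu_c;2N\mu_c+1;\tfrac{1}{km\lambda_1+1},\dots,\tfrac{1}{km\lambda_{2N}+1}\right]$$ and $\hat C_{p,\eta}$ by the same formula with $\hat\lambda_i$ in place of $\lambda_i$. Then $\hat C_{p,\eta}\ge C_{p,\eta}$.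
   Context: $F_D^{(n)}[a,b_1,\dots,b_n;c;x_1,\dots,x_n]=\sum_{i_1,\dots,i_n\ge0}\frac{(a)_{i_1+\dots+i_n}(b_1)_{i_1}\cdots(b_n)_{i_n}}{(c)_{i_1+\dots+i_n}}\prod_j\frac{x_j^{i_j}}{i_j!}$ (Lauricella's fourth function), $(a)_n=\Gamma(a+n)/\Gamma(a)$. Interpretation: $C_{p,\eta}$ is the coverage probability $P(g\ge kI)$ of a user whose channel power $g$ is Gamma with shape $m$ and scale $1/m$, against $N$ independent $\eta$-$\mu$ interferers with common $\mu=\mu_c$, where the total interference equals in law $\sum_{i=1}^{2N}\lambda_iG_i$ with $G_i$ i.i.d. Gamma$(\mu_c,1)$; $\hat C_{p,\eta}$ is the correlated-interferer analogue, with $\mathbf{C}_\eta$ having entries $\sqrt{\rho_{ij}}$ and $\rho_{ij}=0$ whenever $i+j$ is odd. *)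

theory Defs
  imports "HOL-Analysis.Analysis" "Jordan_Normal_Form.Char_Poly"
begin

text \<open>Lauricella's fourth function F_D^(n)[a, b_0..b_(n-1); c; x_0..x_(n-1)]
 (0-based indices), as a sum over all multi-indices i : {0..<n} -> nat
 (functions vanishing outside {0..<n}).\<close>
definition lauricella_FD ::
  "nat \<Rightarrow> real \<Rightarrow> (nat \<Rightarrow> real) \<Rightarrow> real \<Rightarrow> (nat \<Rightarrow> real) \<Rightarrow> real" where
  "lauricella_FD n a b c x =
     (\<Sum>\<^sub>\<infinity> i \<in> {i :: nat \<Rightarrow> nat. \<forall>j. n \<le> j \<longrightarrow> i j = 0}.
        pochhammer a (\<Sum>j<n. i j) * (\<Prod>j<n. pochhammer (b j) (i j))
        / pochhammer c (\<Sum>j<n. i j)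
        * (\<Prod>j<n. x j ^ i j / fact (i j)))"

definition coverage :: "nat \<Rightarrow> real \<Rightarrow> real \<Rightarrow> real \<Rightarrow> (nat \<Rightarrow> real) \<Rightarrow> real" where
  "coverage N mu m k lam =
     Gamma (2 * real N * mu + m) / (Gamma (2 * real N * mu + 1) * Gamma m)
     * (\<Prod>i<2*N. (1 / (k * m * lam i + 1)) powr mu)
     * lauricella_FD (2*N) (1 - m) (\<lambda>_. mu) (2 * real N * mu + 1)
         (\<lambda>i. 1 / (k * m * lam i + 1))"

definition sym_pos_def :: "real mat \<Rightarrow> bool" where
  "sym_pos_def A \<longleftrightarrow> A\<^sup>T = A \<and>
     (\<forall>v \<in> carrier_vec (dim_row A). v \<noteq> 0\<^sub>v (dim_row A) \<longrightarrow> v \<bullet> (A *\<^sub>v v) > 0)"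

end

theory Submission
  imports Defs
begin


definition qf :: "nat \<Rightarrow> real mat \<Rightarrow> (nat \<Rightarrow> real) \<Rightarrow> real" where
  "qf n A v = (\<Sum>i<n. \<Sum>j<n. v i * A $$ (i,j) * v j)"

definition pdm :: "nat \<Rightarrow> real mat \<Rightarrow> bool" where
  "pdm n A \<longleftrightarrow> A \<in> carrier_mat n n \<and> (\<forall>i<n. \<forall>j<n. A $$ (i,j) = A $$ (j,i)) \<and>
     (\<forall>v. (\<exists>i<n. v i \<noteq> 0) \<longrightarrow> qf n A v > 0)"

lemma pdm_diag_pos:
  assumes "pdm n A" "i < n" shows "A $$ (i,i) > 0"
proof -
  let ?v = "\<lambda>k. if k = i then 1 else (0::real)"
  from assms(1) have h: "\<forall>v. (\<exists>i<n. v i \<noteq> 0) \<longrightarrow> qf n A v > 0" unfolding pdm_def by blast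
  have "\<exists>k<n. ?v k \<noteq> 0" using assms(2) by (intro exI[of _ i] conjI) simp_all
  then have pos: "qf n A ?v > 0" by (rule h[rule_format])
  have inner: "(\<Sum>j<n. A $$ (i,j) * (if j = i then 1 else 0)) = A $$ (i,i)"
    using assms(2) by (subst sum.remove[of _ i]) auto
  have "qf n A ?v = (\<Sum>i'<n. if i' = i then A $$ (i,i) else 0)"
    unfolding qf_def using inner by (intro sum.cong refl) auto
  also have "\<dots> = A $$ (i,i)" using assms(2) by simp
  finally show ?thesis using pos by simp
qed

lemma schur_qf:
  fixes A :: "real mat" and v :: "nat \<Rightarrow> real"
  assumes sym: "\<forall>i<Suc n. \<forall>j<Suc n. A $$ (i,j) = A $$ (j,i)" and p: "A $$ (0,0) \<noteq> 0"
  defines "b \<equiv> (\<Sum>j<n. A $$ (0, Suc j) * v j)"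
  defines "w \<equiv> (\<lambda>k. if k = 0 then - b / A $$ (0,0) else v (k - 1))"
  shows "qf (Suc n) A w = (\<Sum>i<n. \<Sum>j<n. v i * (A $$ (Suc i, Suc j) - A $$ (Suc i, 0) * A $$ (0, Suc j) / A $$ (0,0)) * v j)"
proof -
  let ?p = "A $$ (0,0)"
  have b2: "(\<Sum>i<n. v i * A $$ (Suc i, 0)) = b"
    unfolding b_def using sym by (intro sum.cong) auto
  have "qf (Suc n) A w = (\<Sum>i<Suc n. w i * (\<Sum>j<Suc n. A $$ (i,j) * w j))"
    unfolding qf_def by (simp only: sum_distrib_left mult.assoc)
  also have "\<dots> = w 0 * (?p * w 0 + b) + (\<Sum>i<n. v i * (A $$ (Suc i, 0) * w 0 + (\<Sum>j<n. A $$ (Suc i, Suc j) * v j)))"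
    unfolding sum.lessThan_Suc_shift by (simp add: w_def b_def del: sum.lessThan_Suc)
  also have "\<dots> = w 0 * (?p * w 0 + b) + w 0 * (\<Sum>i<n. v i * A $$ (Suc i, 0)) + (\<Sum>i<n. \<Sum>j<n. v i * A $$ (Suc i, Suc j) * v j)"
    by (simp add: algebra_simps sum.distrib sum_distrib_left sum_distrib_right)
  also have "\<dots> = (\<Sum>i<n. \<Sum>j<n. v i * A $$ (Suc i, Suc j) * v j) - b * b / ?p"
    using p unfolding b2 by (simp add: w_def field_simps)
  also have "b * b = (\<Sum>i<n. v i * A $$ (Suc i, 0)) * (\<Sum>j<n. A $$ (0, Suc j) * v j)"
    using b2 by (simp add: b_def mult.commute)
  also have "(\<Sum>i<n. \<Sum>j<n. v i * A $$ (Suc i, Suc j) * v j) - \<dots> / ?p =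
     (\<Sum>i<n. \<Sum>j<n. v i * (A $$ (Suc i, Suc j) - A $$ (Suc i, 0) * A $$ (0, Suc j) / ?p) * v j)"
    by (simp add: sum_distrib_left sum_distrib_right sum_subtractf sum_divide_distrib algebra_simps)
  finally show ?thesis .
qed

definition schurS :: "nat \<Rightarrow> real mat \<Rightarrow> real mat" where
  "schurS n A = mat n n (\<lambda>(i,j). A $$ (Suc i, Suc j) - A $$ (Suc i, 0) * A $$ (0, Suc j) / A $$ (0,0))"

lemma det_schur:
  fixes A :: "real mat"
  assumes A: "A \<in> carrier_mat (Suc n) (Suc n)" and p: "A $$ (0,0) \<noteq> 0"
  shows "det A = A $$ (0,0) * det (schurS n A)"
proof -
  let ?p = "A $$ (0,0)"
  define L where "L = mat (Suc n) (Suc n) (\<lambda>(i,j). (if i = j then 1 else 0) + (if j = 0 \<and> i \<noteq> 0 then - A $$ (i,0) / ?p else (0::real)))"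
  have Lc: "L \<in> carrier_mat (Suc n) (Suc n)" unfolding L_def by auto
  have "det L = prod_list (diag_mat L)"
    by (rule det_lower_triangular[OF _ Lc]) (auto simp: L_def)
  also have "diag_mat L = map (\<lambda>_. 1) [0..<Suc n]"
    unfolding diag_mat_def L_def by (intro map_cong) auto
  also have "prod_list (map (\<lambda>_. 1::real) xs) = 1" for xs :: "nat list" by (induct xs) auto
  finally have dL: "det L = 1" .
  define B where "B = four_block_mat (mat 1 1 (\<lambda>_. ?p)) (mat 1 n (\<lambda>(_,j). A $$ (0, Suc j))) (0\<^sub>m n 1) (schurS n A)"
  have LA: "L * A = B"
  proof (rule eq_matI)
    show "dim_row (L * A) = dim_row B" "dim_col (L * A) = dim_col B"
      using A by (auto simp: B_def L_def schurS_def)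
    fix i j assume i: "i < dim_row B" and j: "j < dim_col B"
    hence i': "i < Suc n" and j': "j < Suc n" by (auto simp: B_def schurS_def)
    have "(L * A) $$ (i,j) = (\<Sum>k<Suc n. L $$ (i,k) * A $$ (k,j))"
      using A i' j' by (simp add: L_def scalar_prod_def atLeast0LessThan)
    also have "\<dots> = (\<Sum>k<Suc n. (if i = k then A $$ (k,j) else 0) + (if k = 0 \<and> i \<noteq> 0 then - A $$ (i,0) / ?p * A $$ (k,j) else 0))"
      using i' by (intro sum.cong) (auto simp: L_def)
    also have "\<dots> = A $$ (i,j) + (if i \<noteq> 0 then - A $$ (i,0) / ?p * A $$ (0,j) else 0)"
      using i' by (simp add: sum.distrib)
    also have "\<dots> = B $$ (i,j)"
      using i' j' p by (cases i; cases j) (auto simp: B_def schurS_def)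
    finally show "(L * A) $$ (i,j) = B $$ (i,j)" .
  qed
  have "det (L * A) = det L * det A" by (rule det_mult[OF Lc A])
  hence "det A = det B" using dL LA by simp
  also have "det B = det (mat 1 1 (\<lambda>_. ?p)) * det (schurS n A)"
    unfolding B_def by (rule det_four_block_mat_lower_left_zero_col) (auto simp: schurS_def)
  also have "det (mat 1 1 (\<lambda>_. ?p)) = ?p" by (subst det_single) auto
  finally show ?thesis .
qed

lemma hadamard:
  "pdm n A \<Longrightarrow> 0 < det A \<and> det A \<le> (\<Prod>i<n. A $$ (i,i))"
proof (induction n arbitrary: A)
  case 0
  then have "A \<in> carrier_mat 0 0" unfolding pdm_def by blast
  then show ?case by simp
next
  case (Suc n)
  have A: "A \<in> carrier_mat (Suc n) (Suc n)" and sym: "\<forall>i<Suc n. \<forall>j<Suc n. A $$ (i,j) = A $$ (j,i)"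
    using Suc.prems unfolding pdm_def by blast+
  have p: "A $$ (0,0) > 0" using pdm_diag_pos[OF Suc.prems] by simp
  have s1: "\<And>i j. i < Suc n \<Longrightarrow> j < Suc n \<Longrightarrow> A $$ (i,j) = A $$ (j,i)" using sym by blast
  let ?S = "schurS n A"
  have pS: "pdm n ?S"
    unfolding pdm_def
  proof (intro conjI allI impI)
    show "?S \<in> carrier_mat n n" by (simp add: schurS_def)
    fix i j assume ij: "i < n" "j < n"
    have a: "A $$ (Suc i, Suc j) = A $$ (Suc j, Suc i)" "A $$ (Suc i, 0) = A $$ (0, Suc i)"
        "A $$ (0, Suc j) = A $$ (Suc j, 0)"
      using s1[of "Suc i" "Suc j"] s1[of "Suc i" 0] s1[of 0 "Suc j"] ij by simp_all
    show "?S $$ (i,j) = ?S $$ (j,i)"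
      unfolding schurS_def using ij by (simp add: a mult.commute)
  next
    fix v :: "nat \<Rightarrow> real" assume "\<exists>i<n. v i \<noteq> 0"
    then obtain i where i: "i < n" "v i \<noteq> 0" by blast
    define w where "w = (\<lambda>k. if k = 0 then - (\<Sum>j<n. A $$ (0, Suc j) * v j) / A $$ (0,0) else v (k - 1))"
    from Suc.prems have h: "\<forall>v. (\<exists>i<Suc n. v i \<noteq> 0) \<longrightarrow> qf (Suc n) A v > 0"
      unfolding pdm_def by blast
    have "\<exists>k<Suc n. w k \<noteq> 0" using i by (intro exI[of _ "Suc i"] conjI) (simp_all add: w_def)
    then have "qf (Suc n) A w > 0" by (rule h[rule_format])
    also have "qf (Suc n) A w = (\<Sum>i<n. \<Sum>j<n. v i * (A $$ (Suc i, Suc j) - A $$ (Suc i, 0) * A $$ (0, Suc j) / A $$ (0,0)) * v j)"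
      unfolding w_def by (rule schur_qf[OF sym]) (use p in simp)
    also have "\<dots> = qf n ?S v"
      unfolding qf_def schurS_def by (intro sum.cong refl) auto
    finally show "qf n ?S v > 0" .
  qed
  from Suc.IH[OF pS] have IH: "0 < det ?S" "det ?S \<le> (\<Prod>i<n. ?S $$ (i,i))" by auto
  have dA: "det A = A $$ (0,0) * det ?S" using det_schur[OF A] p by simp
  have "(\<Prod>i<n. ?S $$ (i,i)) \<le> (\<Prod>i<n. A $$ (Suc i, Suc i))"
  proof (rule prod_mono)
    fix i assume i: "i \<in> {..<n}"
    have "0 < ?S $$ (i,i)" using pdm_diag_pos[OF pS] i by simp
    moreover have "?S $$ (i,i) \<le> A $$ (Suc i, Suc i)"
    proof -
      have e: "A $$ (0, Suc i) = A $$ (Suc i, 0)" using s1[of 0 "Suc i"] i by simp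
      have "?S $$ (i,i) = A $$ (Suc i, Suc i) - A $$ (Suc i, 0) ^ 2 / A $$ (0,0)"
        using i unfolding schurS_def by (simp add: e power2_eq_square)
      moreover have "A $$ (Suc i, 0) ^ 2 / A $$ (0,0) \<ge> 0" using p by simp
      ultimately show ?thesis by linarith
    qed
    ultimately show "0 \<le> ?S $$ (i,i) \<and> ?S $$ (i,i) \<le> A $$ (Suc i, Suc i)" by simp
  qed
  hence "det A \<le> A $$ (0,0) * (\<Prod>i<n. A $$ (Suc i, Suc i))"
    unfolding dA using IH p by (meson mult_left_mono order.trans less_imp_le)
  also have "\<dots> = (\<Prod>i<Suc n. A $$ (i,i))" by (simp only: prod.lessThan_Suc_shift)
  finally show ?case using dA IH p by simp
qed

lemma prod_list_map_upt: "prod_list (map f [0..<n]) = (\<Prod>i<n. f i)"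
  by (induct n) auto

lemma eig_compare:
  fixes C :: "real mat" and lam lamhat :: "nat \<Rightarrow> real" and s :: real
  assumes C: "C \<in> carrier_mat M M" and spd: "sym_pos_def C" and diag: "\<forall>i<M. C $$ (i,i) = 1"
    and lam: "\<forall>i<M. lam i > 0"
    and cp: "char_poly (mat_diag M lam * C) = (\<Prod>i<M. [:- lamhat i, 1:])"
    and s: "s \<ge> 0"
  shows "0 < (\<Prod>i<M. s + lamhat i) \<and> (\<Prod>i<M. s + lamhat i) \<le> (\<Prod>i<M. s + lam i)"
proof -
  define P where "P = mat M M (\<lambda>(i,j). (if i = j then s / lam i else 0) + C $$ (i,j))"
  have Pc: "P \<in> carrier_mat M M" by (simp add: P_def)
  have Csym: "C $$ (i,j) = C $$ (j,i)" if "i < M" "j < M" for i j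
  proof -
    have "C\<^sup>T = C" using spd by (simp add: sym_pos_def_def)
    hence "C\<^sup>T $$ (i,j) = C $$ (i,j)" by simp
    thus ?thesis using that C by simp
  qed
  have pP: "pdm M P"
    unfolding pdm_def
  proof (intro conjI allI impI)
    show "P \<in> carrier_mat M M" by (rule Pc)
    fix i j assume ij: "i < M" "j < M" thus "P $$ (i,j) = P $$ (j,i)" using Csym[OF ij] by (auto simp: P_def)
  next
    fix v :: "nat \<Rightarrow> real" assume "\<exists>i<M. v i \<noteq> 0"
    then obtain i where i: "i < M" "v i \<noteq> 0" by blast
    let ?w = "vec M v"
    have wne: "?w \<noteq> 0\<^sub>v M"
    proof
      assume "?w = 0\<^sub>v M"
      hence "?w $ i = 0\<^sub>v M $ i" by simp
      thus False using i by simp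
    qed
    have pd: "\<forall>v \<in> carrier_vec (dim_row C). v \<noteq> 0\<^sub>v (dim_row C) \<longrightarrow> v \<bullet> (C *\<^sub>v v) > 0"
      using spd unfolding sym_pos_def_def by blast
    have dC: "dim_row C = M" using C by simp
    have "?w \<in> carrier_vec (dim_row C)" using C by simp
    hence "?w \<bullet> (C *\<^sub>v ?w) > 0" using pd wne unfolding dC by blast
    also have "?w \<bullet> (C *\<^sub>v ?w) = qf M C v"
      using C unfolding qf_def by (simp add: scalar_prod_def mult_mat_vec_def sum_distrib_left atLeast0LessThan mult.assoc)
    finally have qC: "qf M C v > 0" .
    have "qf M P v = (\<Sum>i<M. \<Sum>j<M. (if i = j then s / lam i * (v i * v i) else 0) + v i * C $$ (i,j) * v j)"
      unfolding qf_def P_def by (intro sum.cong refl) (auto simp: algebra_simps)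
    also have "\<dots> = (\<Sum>i<M. s / lam i * (v i * v i)) + qf M C v"
      by (simp add: sum.distrib qf_def)
    also have "(\<Sum>i<M. s / lam i * (v i * v i)) \<ge> 0"
      using lam s by (intro sum_nonneg) auto
    ultimately show "qf M P v > 0" using qC by linarith
  qed
  from hadamard[OF pP] have H: "0 < det P" "det P \<le> (\<Prod>i<M. P $$ (i,i))" by auto
  have Pd: "(\<Prod>i<M. P $$ (i,i)) = (\<Prod>i<M. s / lam i + 1)"
    using diag by (intro prod.cong) (auto simp: P_def)
  have dD: "det (mat_diag M lam) = (\<Prod>i<M. lam i)"
    by (subst det_upper_triangular[of _ M]) (auto simp: mat_diag_def diag_mat_def prod_list_map_upt)
  have lam0: "\<And>i. i < M \<Longrightarrow> lam i \<noteq> 0" using lam by force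
  have X: "mat_diag M lam * P = mat_diag M lam * C + s \<cdot>\<^sub>m 1\<^sub>m M"
    unfolding mat_diag_mult_left[OF Pc] mat_diag_mult_left[OF C]
    using lam0 C by (auto simp: P_def distrib_left intro!: eq_matI)
  have "poly (char_poly (mat_diag M lam * C)) (-s) = det (- char_matrix (mat_diag M lam * C) (-s))"
    by (rule char_poly_matrix, rule mult_carrier_mat[OF mat_diag_dim C])
  also have "- char_matrix (mat_diag M lam * C) (-s) = (-1) \<cdot>\<^sub>m (mat_diag M lam * P)"
    unfolding X char_matrix_def using C mult_carrier_mat[OF mat_diag_dim C]
    by (auto simp: mat_diag_def intro!: eq_matI)
  also have "det \<dots> = (-1)^M * (det (mat_diag M lam) * det P)"
    using det_mult[OF mat_diag_dim Pc] Pc by simp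
  finally have e1: "poly (char_poly (mat_diag M lam * C)) (-s) = (-1)^M * ((\<Prod>i<M. lam i) * det P)"
    unfolding dD .
  have "poly (char_poly (mat_diag M lam * C)) (-s) = (\<Prod>i<M. (-1) * (s + lamhat i))"
    unfolding cp poly_prod by (intro prod.cong) auto
  also have "\<dots> = (-1)^M * (\<Prod>i<M. s + lamhat i)" by (simp only: prod.distrib prod_constant card_lessThan)
  finally have key: "(\<Prod>i<M. s + lamhat i) = (\<Prod>i<M. lam i) * det P" using e1 by simp
  have pl: "(\<Prod>i<M. lam i) > 0" using lam by (intro prod_pos) auto
  have "(\<Prod>i<M. lam i) * det P \<le> (\<Prod>i<M. lam i) * (\<Prod>i<M. s / lam i + 1)"
    using H Pd pl by simp
  also have "\<dots> = (\<Prod>i<M. s + lam i)"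
    unfolding prod.distrib[symmetric] using lam by (intro prod.cong) (auto simp: field_simps)
  finally show ?thesis using key pl H by simp
qed



lemma has_sum_nn:
  fixes f :: "'a \<Rightarrow> real"
  assumes "(f has_sum S) A" "\<And>x. x \<in> A \<Longrightarrow> 0 \<le> f x"
  shows "(\<integral>\<^sup>+x. ennreal (f x) \<partial>count_space A) = ennreal S"
proof -
  have "f summable_on A" using assms(1) by (rule has_sum_imp_summable)
  hence "Infinite_Sum.abs_summable_on f A" using summable_on_iff_abs_summable_on_real by blast
  hence abs: "Infinite_Set_Sum.abs_summable_on f A" using abs_summable_equivalent by blast
  have "(\<integral>\<^sup>+x. ennreal (f x) \<partial>count_space A) = ennreal (infsetsum f A)"
    by (rule nn_integral_conv_infsetsum[OF abs assms(2)])
  also have "infsetsum f A = infsum f A" by (rule infsetsum_infsum[OF abs])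
  also have "infsum f A = S" using assms(1) by (rule infsumI)
  finally show ?thesis .
qed

lemma nn_has_sum:
  fixes f :: "'a \<Rightarrow> real"
  assumes nn: "\<And>x. x \<in> A \<Longrightarrow> 0 \<le> f x"
    and R: "(\<integral>\<^sup>+x. ennreal (f x) \<partial>count_space A) = R" and fin: "R \<noteq> \<infinity>"
  shows "(f has_sum enn2real R) A"
proof -
  have "(\<integral>\<^sup>+x. ennreal (norm (f x)) \<partial>count_space A) = (\<integral>\<^sup>+x. ennreal (f x) \<partial>count_space A)"
    using nn by (intro nn_integral_cong) auto
  hence "integrable (count_space A) f"
    using R fin by (subst integrable_iff_bounded) (auto simp: top.not_eq_extremum)
  hence abs: "Infinite_Set_Sum.abs_summable_on f A" by (simp add: abs_summable_on_def)
  have "(\<integral>\<^sup>+x. ennreal (f x) \<partial>count_space A) = ennreal (infsetsum f A)"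
    by (rule nn_integral_conv_infsetsum[OF abs nn])
  also have "infsetsum f A = infsum f A" by (rule infsetsum_infsum[OF abs])
  finally have e: "R = ennreal (infsum f A)" using R by simp
  have "Infinite_Sum.abs_summable_on f A" using abs abs_summable_equivalent by blast
  hence "f summable_on A" by (rule abs_summable_summable)
  moreover have "infsum f A \<ge> 0" using nn by (rule infsum_nonneg)
  ultimately show ?thesis using e by (simp add: has_sum_infsum)
qed

definition Iset :: "nat \<Rightarrow> (nat \<Rightarrow> nat) set" where
  "Iset M = {i. \<forall>j. M \<le> j \<longrightarrow> i j = 0}"

lemma countable_Iset: "countable (Iset M)"
proof -
  have "Iset M \<subseteq> (\<lambda>xs j. if j < length xs then xs ! j else 0) ` (UNIV :: nat list set)"
  proof
    fix i assume i: "i \<in> Iset M"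
    have "i = (\<lambda>j. if j < length (map i [0..<M]) then map i [0..<M] ! j else 0)"
      using i by (auto simp: Iset_def fun_eq_iff)
    thus "i \<in> (\<lambda>xs j. if j < length xs then xs ! j else 0) ` UNIV" by blast
  qed
  thus ?thesis by (rule countable_subset) simp
qed

lemma Iset_Suc: "Iset (Suc M) = (\<lambda>(g,r). g(M := r)) ` (Iset M \<times> UNIV)"
proof (intro equalityI subsetI)
  fix i assume i: "i \<in> Iset (Suc M)"
  hence "i(M := 0) \<in> Iset M" by (auto simp: Iset_def)
  moreover have "i = (i(M := 0))(M := i M)" by simp
  ultimately show "i \<in> (\<lambda>(g,r). g(M := r)) ` (Iset M \<times> UNIV)"
    by (intro image_eqI[of _ _ "(i(M:=0), i M)"]) auto
next
  fix i assume "i \<in> (\<lambda>(g,r). g(M := r)) ` (Iset M \<times> UNIV)"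
  thus "i \<in> Iset (Suc M)" by (auto simp: Iset_def)
qed

lemma inj_Iset_Suc: "inj_on (\<lambda>(g,r). g(M := r)) (Iset M \<times> (UNIV :: nat set))"
proof (rule inj_onI, clarify)
  fix g r g' r' assume g: "g \<in> Iset M" "g' \<in> Iset M" and e: "g(M := r) = g'(M := r')"
  have "r = r'" using fun_cong[OF e, of M] by simp
  moreover have "g = g'"
  proof
    fix j show "g j = g' j"
      using fun_cong[OF e, of j] g by (cases "j = M") (auto simp: Iset_def)
  qed
  ultimately show "g = g' \<and> r = r'" by simp
qed

definition cb :: "real \<Rightarrow> nat \<Rightarrow> real" where
  "cb mu r = pochhammer mu r / fact r"

lemma cb_nonneg: "mu > 0 \<Longrightarrow> cb mu r \<ge> 0"
  unfolding cb_def by (intro divide_nonneg_pos pochhammer_nonneg) auto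

lemma binom_has_sum:
  assumes mu: "mu > 0" and y: "0 \<le> y" "y < 1"
  shows "((\<lambda>r. cb mu r * y ^ r) has_sum (1 - y) powr (- mu)) UNIV"
proof (rule sums_nonneg_imp_has_sum)
  have "(\<lambda>n. ((- mu) gchoose n) * (- y) ^ n) sums (1 + (- y)) powr (- mu)"
    by (rule gen_binomial_real) (use y in auto)
  moreover have "((- mu) gchoose n) * (- y) ^ n = cb mu n * y ^ n" for n
    unfolding gbinomial_pochhammer cb_def
    by (simp add: power_mult_distrib[symmetric] field_simps)
  ultimately show "(\<lambda>r. cb mu r * y ^ r) sums (1 - y) powr (- mu)" by simp
  show "0 \<le> cb mu n * y ^ n" for n using cb_nonneg[OF mu] y by simp
qed

definition FF :: "real \<Rightarrow> nat \<Rightarrow> (nat \<Rightarrow> real) \<Rightarrow> (nat \<Rightarrow> nat) \<Rightarrow> real" where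
  "FF mu M y i = (\<Prod>j<M. cb mu (i j) * y j ^ i j)"

lemma FF_nonneg: "mu > 0 \<Longrightarrow> \<forall>j<M. 0 \<le> y j \<Longrightarrow> FF mu M y i \<ge> 0"
  unfolding FF_def by (intro prod_nonneg) (auto intro: mult_nonneg_nonneg cb_nonneg)

lemma multi_binom:
  assumes mu: "mu > 0" and y: "\<forall>j<M. 0 \<le> y j \<and> y j < 1"
  shows "(FF mu M y has_sum (\<Prod>j<M. (1 - y j) powr (- mu))) (Iset M)"
  using y
proof (induction M)
  case 0
  have "Iset 0 = {\<lambda>_. 0}" by (auto simp: Iset_def)
  thus ?case using has_sum_finite[of "{\<lambda>_. 0::nat}" "\<lambda>_. 1::real"] by (simp add: FF_def)
next
  case (Suc M)
  let ?h = "\<lambda>(g::nat\<Rightarrow>nat, r::nat). g(M := r)"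
  have IH: "(FF mu M y has_sum (\<Prod>j<M. (1 - y j) powr (- mu))) (Iset M)"
    using Suc by auto
  have yM: "0 \<le> y M" "y M < 1" using Suc.prems by auto
  have comp: "FF mu (Suc M) y (g(M := r)) = FF mu M y g * (cb mu r * y M ^ r)" if "g \<in> Iset M" for g r
  proof -
    have "(\<Prod>j<M. cb mu ((g(M := r)) j) * y j ^ (g(M := r)) j) = FF mu M y g"
      unfolding FF_def by (intro prod.cong) auto
    thus ?thesis by (simp add: FF_def)
  qed
  have "((\<lambda>(g, r). FF mu M y g * (cb mu r * y M ^ r)) has_sum
          ((\<Prod>j<M. (1 - y j) powr (- mu)) * (1 - y M) powr (- mu))) (Sigma (Iset M) (\<lambda>_. UNIV))"
  proof (rule has_sum_SigmaI)
    fix g assume "g \<in> Iset M"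
    show "((\<lambda>r. case (g, r) of (g, r) \<Rightarrow> FF mu M y g * (cb mu r * y M ^ r)) has_sum
            FF mu M y g * (1 - y M) powr (- mu)) UNIV"
      using has_sum_cmult_right[OF binom_has_sum[OF mu yM], of "FF mu M y g"] by simp
  next
    show "((\<lambda>g. FF mu M y g * (1 - y M) powr (- mu)) has_sum
           (\<Prod>j<M. (1 - y j) powr (- mu)) * (1 - y M) powr (- mu)) (Iset M)"
      by (rule has_sum_cmult_left[OF IH])
  next
    show "(\<lambda>(g, r). FF mu M y g * (cb mu r * y M ^ r)) summable_on Sigma (Iset M) (\<lambda>_. UNIV)"
    proof (rule summable_on_SigmaI)
      fix g assume "g \<in> Iset M"
      show "((\<lambda>r. case (g, r) of (g, r) \<Rightarrow> FF mu M y g * (cb mu r * y M ^ r)) has_sum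
            FF mu M y g * (1 - y M) powr (- mu)) UNIV"
        using has_sum_cmult_right[OF binom_has_sum[OF mu yM], of "FF mu M y g"] by simp
    next
      show "(\<lambda>g. FF mu M y g * (1 - y M) powr (- mu)) summable_on Iset M"
        using has_sum_cmult_left[OF IH] by (rule has_sum_imp_summable)
    next
      fix g r assume "g \<in> Iset M" "r \<in> (UNIV :: nat set)"
      show "0 \<le> (case (g, r) of (g, r) \<Rightarrow> FF mu M y g * (cb mu r * y M ^ r))"
        using FF_nonneg[OF mu, of M y g] cb_nonneg[OF mu, of r] yM Suc.prems by auto
    qed
  qed
  moreover have "((FF mu (Suc M) y \<circ> ?h) has_sum S) (Iset M \<times> UNIV) \<longleftrightarrow>
     ((\<lambda>(g, r). FF mu M y g * (cb mu r * y M ^ r)) has_sum S) (Iset M \<times> UNIV)" for S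
    by (intro has_sum_cong) (auto simp: comp)
  ultimately have "((FF mu (Suc M) y \<circ> ?h) has_sum (\<Prod>j<Suc M. (1 - y j) powr (- mu))) (Iset M \<times> UNIV)"
    by simp
  hence "(FF mu (Suc M) y has_sum (\<Prod>j<Suc M. (1 - y j) powr (- mu))) (?h ` (Iset M \<times> UNIV))"
    by (rule iffD2[OF has_sum_reindex[OF inj_Iset_Suc[of M]]])
  thus ?case by (simp only: Iset_Suc[of M])
qed


lemma powr_times_pow: "0 \<le> (t::real) \<Longrightarrow> t powr (a - 1) * t ^ n = t powr (a + real n - 1)"
proof (cases "t = 0")
  case False
  assume "0 \<le> t" hence t: "t > 0" using False by simp
  have "t powr (a - 1) * t ^ n = t powr (a - 1) * t powr (real n)" using t by (simp add: powr_realpow)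
  also have "\<dots> = t powr (a + real n - 1)" using t by (simp add: powr_add[symmetric] algebra_simps)
  finally show ?thesis .
qed simp

lemma beta_moment:
  fixes a b K :: real
  assumes a: "a > 0" and b: "b > 0" and K: "K \<ge> 0"
  shows "(\<integral>\<^sup>+t. ennreal (t powr (a - 1) * (1 - t) powr (b - 1) * t ^ n * K) * indicator {0..1} t \<partial>lborel)
          = ennreal (K * Beta (a + real n) b)"
proof -
  have h: "((\<lambda>t. t powr (a + real n - 1) * (1 - t) powr (b - 1) * K) has_integral (Beta (a + real n) b * K)) {0..1}"
    using has_integral_mult_left[OF has_integral_Beta_real[of "a + real n" b]] a b by simp
  have "(\<integral>\<^sup>+t. ennreal (t powr (a + real n - 1) * (1 - t) powr (b - 1) * K) * indicator {0..1} t \<partial>lborel)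
         = ennreal (Beta (a + real n) b * K)"
    by (rule nn_integral_has_integral_lebesgue'[OF _ h]) (use K in auto)
  moreover have "(\<integral>\<^sup>+t. ennreal (t powr (a - 1) * (1 - t) powr (b - 1) * t ^ n * K) * indicator {0..1} t \<partial>lborel)
     = (\<integral>\<^sup>+t. ennreal (t powr (a + real n - 1) * (1 - t) powr (b - 1) * K) * indicator {0..1} t \<partial>lborel)"
  proof (intro nn_integral_cong)
    fix t :: real
    show "ennreal (t powr (a - 1) * (1 - t) powr (b - 1) * t ^ n * K) * indicator {0..1} t =
          ennreal (t powr (a + real n - 1) * (1 - t) powr (b - 1) * K) * indicator {0..1} t"
    proof (cases "t \<in> {0..1}")
      case True
      hence "t powr (a - 1) * (1 - t) powr (b - 1) * t ^ n * K = t powr (a + real n - 1) * (1 - t) powr (b - 1) * K"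
        using powr_times_pow[of t a n] by (simp add: algebra_simps)
      thus ?thesis by (rule arg_cong[where f="\<lambda>z. ennreal z * indicator {0..1} t"])
    qed simp
  qed
  ultimately show ?thesis by (simp add: mult.commute)
qed

lemma nonpos_Ints_pos: "(a::real) > 0 \<Longrightarrow> a \<notin> \<int>\<^sub>\<le>\<^sub>0"
  using nonpos_Ints_nonpos by force

lemma beta_poch:
  fixes a c :: real assumes "0 < a" "a < c"
  shows "Beta a (c - a) * (pochhammer a n / pochhammer c n) = Beta (a + real n) (c - a)"
proof -
  have ga: "Gamma a > 0" "Gamma c > 0" "Gamma (c - a) > 0" "Gamma (a + real n) > 0" "Gamma (c + real n) > 0"
    using assms by (auto intro!: Gamma_real_pos)
  have pa: "pochhammer a n = Gamma (a + real n) / Gamma a"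
    using pochhammer_Gamma[OF nonpos_Ints_pos[OF assms(1)]] by simp
  have pc: "pochhammer c n = Gamma (c + real n) / Gamma c"
    using pochhammer_Gamma[OF nonpos_Ints_pos, of c n] assms by simp
  have e: "a + real n + (c - a) = c + real n" by simp
  show ?thesis unfolding Beta_def pa pc e using ga by (simp add: field_simps)
qed

lemma FD_int:
  fixes M :: nat and a c mu :: real and x :: "nat \<Rightarrow> real"
  assumes a: "0 < a" "a < c" and mu: "mu > 0" and x: "\<forall>j<M. 0 \<le> x j \<and> x j < 1"
  shows "ennreal (Beta a (c - a) * lauricella_FD M a (\<lambda>_. mu) c x) =
    (\<integral>\<^sup>+t. ennreal (t powr (a - 1) * (1 - t) powr (c - a - 1) * (\<Prod>j<M. (1 - x j * t) powr (- mu)))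
        * indicator {0..1} t \<partial>lborel)"
proof -
  define B where "B = Beta a (c - a)"
  have Bpos: "B > 0" unfolding B_def Beta_def using a by (auto intro!: Gamma_real_pos divide_pos_pos mult_pos_pos)
  define tm where "tm = (\<lambda>i. pochhammer a (\<Sum>j<M. i j) * (\<Prod>j<M. pochhammer mu (i j)) / pochhammer c (\<Sum>j<M. i j)
        * (\<Prod>j<M. x j ^ i j / fact (i j)))"
  have L: "lauricella_FD M a (\<lambda>_. mu) c x = infsum tm (Iset M)"
    unfolding lauricella_FD_def tm_def Iset_def by simp
  define f where "f = (\<lambda>(i::nat\<Rightarrow>nat) t. ennreal (t powr (a - 1) * (1 - t) powr (c - a - 1) * t ^ (\<Sum>j<M. i j) * FF mu M x i) * indicator {0..1} t)"
  have FFx: "FF mu M x i \<ge> 0" for i using FF_nonneg[OF mu, of M x i] x by auto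
  have tm_eq: "tm i = pochhammer a (\<Sum>j<M. i j) / pochhammer c (\<Sum>j<M. i j) * FF mu M x i" for i
  proof -
    have "(\<Prod>j<M. pochhammer mu (i j)) * (\<Prod>j<M. x j ^ i j / fact (i j)) = FF mu M x i"
      unfolding FF_def cb_def prod.distrib[symmetric] by (intro prod.cong) auto
    thus ?thesis unfolding tm_def by (simp add: field_simps)
  qed
  have step1: "ennreal (B * tm i) = integral\<^sup>N lborel (f i)" for i
  proof -
    define n where "n = (\<Sum>j<M. i j)"
    have "B * tm i = FF mu M x i * (B * (pochhammer a n / pochhammer c n))"
      unfolding tm_eq n_def by (simp add: algebra_simps)
    also have "\<dots> = FF mu M x i * Beta (a + real n) (c - a)"
      using beta_poch[OF a, of n] unfolding B_def by simp
    finally have e: "B * tm i = FF mu M x i * Beta (a + real n) (c - a)" .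
    have "integral\<^sup>N lborel (f i) = ennreal (FF mu M x i * Beta (a + real n) (c - a))"
      unfolding f_def n_def[symmetric] using beta_moment[of a "c - a" "FF mu M x i" n] a FFx by simp
    thus ?thesis using e by simp
  qed
  have meas: "f i \<in> borel_measurable lborel" for i unfolding f_def by measurable
  have step3: "(\<integral>\<^sup>+i. f i t \<partial>count_space (Iset M)) =
     ennreal (t powr (a - 1) * (1 - t) powr (c - a - 1) * (\<Prod>j<M. (1 - x j * t) powr (- mu))) * indicator {0..1} t" for t
  proof (cases "t \<in> {0..1}")
    case True
    define y where "y = (\<lambda>j. x j * t)"
    have y: "\<forall>j<M. 0 \<le> y j \<and> y j < 1"
    proof (intro allI impI)
      fix j assume "j < M"
      hence "0 \<le> x j" "x j < 1" using x by auto
      moreover have "x j * t \<le> x j" using True \<open>0 \<le> x j\<close> by (simp add: mult_left_le)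
      ultimately show "0 \<le> y j \<and> y j < 1" using True by (simp add: y_def)
    qed
    have FFy: "FF mu M y i = t ^ (\<Sum>j<M. i j) * FF mu M x i" for i
      unfolding FF_def y_def power_sum prod.distrib[symmetric] by (intro prod.cong) (auto simp: power_mult_distrib)
    define ph where "ph = t powr (a - 1) * (1 - t) powr (c - a - 1)"
    have ph: "ph \<ge> 0" unfolding ph_def by simp
    have hs: "((\<lambda>i. ph * FF mu M y i) has_sum (ph * (\<Prod>j<M. (1 - y j) powr (- mu)))) (Iset M)"
      by (rule has_sum_cmult_right[OF multi_binom[OF mu y]])
    have "(\<integral>\<^sup>+i. f i t \<partial>count_space (Iset M)) = (\<integral>\<^sup>+i. ennreal (ph * FF mu M y i) \<partial>count_space (Iset M))"
      using True unfolding f_def FFy ph_def by (intro nn_integral_cong) (simp add: algebra_simps)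
    also have "\<dots> = ennreal (ph * (\<Prod>j<M. (1 - y j) powr (- mu)))"
      by (rule has_sum_nn[OF hs]) (use ph FF_nonneg[OF mu] y in auto)
    finally show ?thesis using True by (simp add: ph_def y_def)
  next
    case False
    thus ?thesis unfolding f_def by simp
  qed
  define R where "R = (\<integral>\<^sup>+t. ennreal (t powr (a - 1) * (1 - t) powr (c - a - 1) * (\<Prod>j<M. (1 - x j * t) powr (- mu)))
        * indicator {0..1} t \<partial>lborel)"
  have sumR: "(\<integral>\<^sup>+i. ennreal (B * tm i) \<partial>count_space (Iset M)) = R"
  proof -
    have "(\<integral>\<^sup>+i. ennreal (B * tm i) \<partial>count_space (Iset M)) = (\<integral>\<^sup>+i. integral\<^sup>N lborel (f i) \<partial>count_space (Iset M))"
      using step1 by simp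
    also have "\<dots> = (\<integral>\<^sup>+t. \<integral>\<^sup>+i. f i t \<partial>count_space (Iset M) \<partial>lborel)"
      by (rule nn_integral_count_space_nn_integral[symmetric]) (use countable_Iset meas in auto)
    also have "\<dots> = R" unfolding R_def step3 ..
    finally show ?thesis .
  qed
  define Q where "Q = (\<Prod>j<M. (1 - x j) powr (- mu))"
  have Q: "Q \<ge> 0" unfolding Q_def by (intro prod_nonneg) auto
  have "R \<le> (\<integral>\<^sup>+t. ennreal (t powr (a - 1) * (1 - t) powr (c - a - 1) * t ^ 0 * Q) * indicator {0..1} t \<partial>lborel)"
    unfolding R_def
  proof (intro nn_integral_mono)
    fix t :: real
    show "ennreal (t powr (a - 1) * (1 - t) powr (c - a - 1) * (\<Prod>j<M. (1 - x j * t) powr (- mu))) * indicator {0..1} t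
       \<le> ennreal (t powr (a - 1) * (1 - t) powr (c - a - 1) * t ^ 0 * Q) * indicator {0..1} t"
    proof (cases "t \<in> {0..1}")
      case True
      have "(\<Prod>j<M. (1 - x j * t) powr (- mu)) \<le> Q"
        unfolding Q_def
      proof (intro prod_mono conjI)
        fix j assume "j \<in> {..<M}"
        hence xj: "0 \<le> x j" "x j < 1" using x by auto
        have "x j * t \<le> x j" using True xj by (simp add: mult_left_le)
        thus "(1 - x j * t) powr (- mu) \<le> (1 - x j) powr (- mu)"
          using xj mu by (intro powr_mono2') auto
      qed simp
      moreover have "t powr (a - 1) * (1 - t) powr (c - a - 1) \<ge> 0" by simp
      ultimately show ?thesis using True by (auto intro!: ennreal_leI mult_left_mono)
    qed simp
  qed
  also have "\<dots> = ennreal (Q * Beta (a + real 0) (c - a))"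
    by (rule beta_moment) (use a Q in auto)
  finally have Rfin: "R \<noteq> \<infinity>" by (auto simp: top_unique)
  have nn: "\<And>i. i \<in> Iset M \<Longrightarrow> 0 \<le> B * tm i"
    using Bpos FFx a unfolding tm_eq
    by (intro mult_nonneg_nonneg divide_nonneg_nonneg pochhammer_nonneg) auto
  have "((\<lambda>i. B * tm i) has_sum enn2real R) (Iset M)"
    by (rule nn_has_sum[OF nn sumR Rfin])
  hence "infsum (\<lambda>i. B * tm i) (Iset M) = enn2real R" by (rule infsumI)
  hence "B * lauricella_FD M a (\<lambda>_. mu) c x = enn2real R"
    unfolding L infsum_cmult_right' .
  moreover have "ennreal (enn2real R) = R" using Rfin by (simp add: less_top ennreal_enn2real)
  ultimately show ?thesis unfolding B_def R_def[symmetric] by simp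
qed



lemma FD_a0: "lauricella_FD n 0 b c x = 1"
proof -
  have "lauricella_FD n 0 b c x = infsum (\<lambda>i. if i = (\<lambda>_. 0) then 1 else 0) {i :: nat \<Rightarrow> nat. \<forall>j. n \<le> j \<longrightarrow> i j = 0}"
    unfolding lauricella_FD_def
  proof (intro infsum_cong)
    fix i :: "nat \<Rightarrow> nat" assume i: "i \<in> {i. \<forall>j. n \<le> j \<longrightarrow> i j = 0}"
    show "pochhammer 0 (\<Sum>j<n. i j) * (\<Prod>j<n. pochhammer (b j) (i j)) / pochhammer c (\<Sum>j<n. i j) *
          (\<Prod>j<n. x j ^ i j / fact (i j)) = (if i = (\<lambda>_. 0) then 1 else 0)"
    proof (cases "i = (\<lambda>_. 0)")
      case False
      then obtain j where j: "i j \<noteq> 0" by auto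
      have jn: "j < n"
      proof (rule ccontr)
        assume "\<not> j < n" hence "n \<le> j" by simp
        with i have "i j = 0" by blast
        with j show False by simp
      qed
      have "(\<Sum>j<n. i j) \<noteq> 0" using jn j by (auto simp: sum_eq_0_iff)
      thus ?thesis using False by (simp add: pochhammer_0_left)
    qed simp
  qed
  also have "\<dots> = 1"
    by (subst infsum_cong_neutral[where T = "{\<lambda>_. 0}" and g = "\<lambda>_. 1"]) auto
  finally show ?thesis .
qed

lemma FD_nonneg:
  assumes "a > 0" "mu > 0" "c > 0" "\<forall>j<n. 0 \<le> x j"
  shows "lauricella_FD n a (\<lambda>_. mu) c x \<ge> 0"
  unfolding lauricella_FD_def
  using assms by (intro infsum_nonneg mult_nonneg_nonneg divide_nonneg_pos prod_nonneg pochhammer_nonneg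
      pochhammer_pos divide_nonneg_nonneg zero_le_power) auto

lemma factor_id:
  fixes z t mu :: real
  assumes z: "z > 0" "t < z"
  shows "(1 / z) powr mu * (1 - 1 / z * t) powr (- mu) = (z - t) powr (- mu)"
proof -
  have "1 - 1 / z * t = (z - t) / z" using z by (simp add: field_simps)
  hence "(1 - 1 / z * t) powr (- mu) = (z - t) powr (- mu) / z powr (- mu)"
    by (simp add: powr_divide)
  moreover have "(1 / z) powr mu = z powr (- mu)" using z by (simp add: powr_divide powr_minus_divide)
  moreover have "z powr (- mu) > 0" using z by simp
  ultimately show ?thesis by simp
qed

theorem mainTheorem4:
  fixes N :: nat and mu m T r alpha :: real
    and d eta lam lamhat :: "nat \<Rightarrow> real" and C :: "real mat"
  assumes "N \<ge> 1" and "mu > 0" and "0 < m" and "m \<le> 1"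
    and "T > 0" and "r > 0" and "alpha \<ge> 2"
    and "\<forall>i<N. d i > 0" and "\<forall>i<N. eta i > 0"
    and "\<forall>i<N. lam (2*i) = d i powr (-alpha) / (mu * (1 + 1 / eta i))"
    and "\<forall>i<N. lam (2*i+1) = d i powr (-alpha) / (mu * (1 + eta i))"
    and "C \<in> carrier_mat (2*N) (2*N)" and "sym_pos_def C"
    and "\<forall>i<2*N. C $$ (i,i) = 1"
    and "char_poly (mat_diag (2*N) lam * C) = (\<Prod>i<2*N. [:- lamhat i, 1:])"
  shows "coverage N mu m (T * r powr alpha) lamhat \<ge> coverage N mu m (T * r powr alpha) lam"
proof -
  note mu = assms(2) and m = assms(3,4)
  define k where "k = T * r powr alpha"
  have k: "k > 0" using assms(5,6) by (simp add: k_def)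
  have km: "k * m > 0" using k m by simp
  have lampos: "\<forall>i<2*N. lam i > 0"
  proof (intro allI impI)
    fix i assume i: "i < 2*N"
    define j where "j = i div 2"
    have j: "j < N" using i unfolding j_def by linarith
    have "d j > 0" using assms(8) j by blast
    hence dj: "d j powr (-alpha) > 0" by simp
    have ej: "eta j > 0" using assms(9) j by simp
    show "lam i > 0"
    proof (cases "even i")
      case True
      then have "i = 2*j" by (simp add: j_def)
      then have "lam i = d j powr (-alpha) / (mu * (1 + 1 / eta j))" using assms(10) j by simp
      also have "\<dots> > 0" using dj ej mu by (intro divide_pos_pos mult_pos_pos add_pos_pos) auto
      finally show ?thesis .
    next
      case False
      then have "i = 2*j+1" by (simp add: j_def)
      then have "lam i = d j powr (-alpha) / (mu * (1 + eta j))" using assms(11) j by simp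
      also have "\<dots> > 0" using dj ej mu by (intro divide_pos_pos mult_pos_pos add_pos_pos) auto
      finally show ?thesis .
    qed
  qed
  have eig: "\<And>s. s \<ge> 0 \<Longrightarrow> 0 < (\<Prod>i<2*N. s + lamhat i) \<and> (\<Prod>i<2*N. s + lamhat i) \<le> (\<Prod>i<2*N. s + lam i)"
    by (rule eig_compare[OF assms(12) assms(13) assms(14) lampos assms(15)])
  have lhpos: "\<forall>i<2*N. lamhat i > 0"
  proof (intro allI impI, rule ccontr)
    fix i assume i: "i < 2*N" "\<not> lamhat i > 0"
    have "- lamhat i \<ge> 0" using i by simp
    from eig[OF this] have pos: "0 < (\<Prod>j<2*N. - lamhat i + lamhat j)" by blast
    have z: "(\<Prod>j<2*N. - lamhat i + lamhat j) = 0" by (rule prod_zero) (use i in auto)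
    from pos z show False by linarith
  qed
  have pw: "(\<Prod>i<2*N. (1 + k * m * lam i - t) powr (- mu)) \<le> (\<Prod>i<2*N. (1 + k * m * lamhat i - t) powr (- mu))"
    if t: "0 \<le> t" "t \<le> 1" for t
  proof -
    define s where "s = (1 - t) / (k * m)"
    have s: "s \<ge> 0" using t km unfolding s_def by simp
    have e: "(\<Prod>i<2*N. 1 + k * m * u i - t) = (k * m) ^ (2*N) * (\<Prod>i<2*N. s + u i)" for u :: "nat \<Rightarrow> real"
    proof -
      have "(\<Prod>i<2*N. 1 + k * m * u i - t) = (\<Prod>i<2*N. (k * m) * (s + u i))"
        using km k m(1) unfolding s_def by (intro prod.cong) (auto simp: field_simps)
      also have "\<dots> = (k * m) ^ (2*N) * (\<Prod>i<2*N. s + u i)" by (simp add: prod.distrib)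
      finally show ?thesis .
    qed
    have h1: "0 < (\<Prod>i<2*N. 1 + k * m * lamhat i - t)" unfolding e using eig[OF s] km by simp
    have h2: "(\<Prod>i<2*N. 1 + k * m * lamhat i - t) \<le> (\<Prod>i<2*N. 1 + k * m * lam i - t)"
      unfolding e using eig[OF s] km by (intro mult_left_mono) auto
    have "(\<Prod>i<2*N. 1 + k * m * lam i - t) powr (- mu) \<le> (\<Prod>i<2*N. 1 + k * m * lamhat i - t) powr (- mu)"
      using h1 h2 mu by (intro powr_mono2') auto
    thus ?thesis by (simp add: prod_powr_distrib)
  qed
  define G where "G = Gamma (2 * real N * mu + m) / (Gamma (2 * real N * mu + 1) * Gamma m)"
  have Nmu: "2 * real N * mu \<ge> 0" using mu by simp
  have G: "G > 0" unfolding G_def by (intro divide_pos_pos mult_pos_pos Gamma_real_pos; use Nmu m in linarith)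
  define Pp where "Pp = (\<lambda>u::nat\<Rightarrow>real. \<Prod>i<2*N. (1 / (k * m * u i + 1)) powr mu)"
  define xx where "xx = (\<lambda>(u::nat\<Rightarrow>real) i. 1 / (k * m * u i + 1))"
  define FD where "FD = (\<lambda>u. lauricella_FD (2*N) (1 - m) (\<lambda>_. mu) (2 * real N * mu + 1) (xx u))"
  have cov: "coverage N mu m k u = G * (Pp u * FD u)" for u
    unfolding coverage_def G_def Pp_def FD_def xx_def by simp
  have Pp0: "Pp u = (\<Prod>i<2*N. (1 + k * m * u i - 0) powr (- mu))" if "\<forall>i<2*N. u i > 0" for u
    unfolding Pp_def
  proof (intro prod.cong refl)
    fix i assume "i \<in> {..<2*N}"
    hence "k * m * u i + 1 > 0" using that km by (simp add: add_pos_pos)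
    thus "(1 / (k * m * u i + 1)) powr mu = (1 + k * m * u i - 0) powr (- mu)"
      by (simp add: powr_divide powr_minus_divide add.commute)
  qed
  have main: "Pp lam * FD lam \<le> Pp lamhat * FD lamhat"
  proof (cases "m = 1")
    case True
    have "FD u = 1" for u unfolding FD_def True by (simp add: FD_a0)
    thus ?thesis using pw[of 0] Pp0[OF lampos] Pp0[OF lhpos] by simp
  next
    case False
    hence m1: "m < 1" using m by simp
    define a where "a = 1 - m"
    define cc where "cc = 2 * real N * mu + 1"
    have a: "0 < a" "a < cc" unfolding a_def cc_def using m1 m Nmu by linarith+
    define B where "B = Beta a (cc - a)"
    have Bpos: "B > 0" unfolding B_def Beta_def using a by (auto intro!: Gamma_real_pos divide_pos_pos mult_pos_pos)
    define ph where "ph = (\<lambda>t::real. t powr (a - 1) * (1 - t) powr (cc - a - 1))"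
    have rep: "ennreal (B * (Pp u * FD u)) =
       (\<integral>\<^sup>+t. ennreal (ph t * (\<Prod>i<2*N. (1 + k * m * u i - t) powr (- mu))) * indicator {0..1} t \<partial>lborel)"
      if u: "\<forall>i<2*N. u i > 0" for u
    proof -
      have x: "\<forall>j<2*N. 0 \<le> xx u j \<and> xx u j < 1"
      proof (intro allI impI)
        fix j assume "j < 2*N"
        hence "k * m * u j > 0" using u km by simp
        thus "0 \<le> xx u j \<and> xx u j < 1" unfolding xx_def by (simp add: field_simps)
      qed
      have Ppn: "Pp u \<ge> 0" unfolding Pp_def by (intro prod_nonneg) auto
      have "ennreal (B * (Pp u * FD u)) = ennreal (Pp u) * ennreal (B * FD u)"
        unfolding mult.left_commute[of B "Pp u"] by (rule ennreal_mult'[OF Ppn])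
      also have "ennreal (B * FD u) = (\<integral>\<^sup>+t. ennreal (ph t * (\<Prod>j<2*N. (1 - xx u j * t) powr (- mu))) * indicator {0..1} t \<partial>lborel)"
        unfolding B_def FD_def ph_def a_def[symmetric] cc_def[symmetric] by (rule FD_int[OF a mu x])
      also have "ennreal (Pp u) * \<dots> = (\<integral>\<^sup>+t. ennreal (Pp u) * (ennreal (ph t * (\<Prod>j<2*N. (1 - xx u j * t) powr (- mu))) * indicator {0..1} t) \<partial>lborel)"
        by (rule nn_integral_cmult[symmetric]) (unfold ph_def, measurable)
      also have "\<dots> = (\<integral>\<^sup>+t. ennreal (ph t * (\<Prod>i<2*N. (1 + k * m * u i - t) powr (- mu))) * indicator {0..1} t \<partial>lborel)"
      proof (intro nn_integral_cong)
        fix t :: real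
        show "ennreal (Pp u) * (ennreal (ph t * (\<Prod>j<2*N. (1 - xx u j * t) powr (- mu))) * indicator {0..1} t) =
              ennreal (ph t * (\<Prod>i<2*N. (1 + k * m * u i - t) powr (- mu))) * indicator {0..1} t"
        proof (cases "t \<in> {0..1}")
          case True
          have pe: "Pp u * (\<Prod>j<2*N. (1 - xx u j * t) powr (- mu)) = (\<Prod>i<2*N. (1 + k * m * u i - t) powr (- mu))"
            unfolding Pp_def prod.distrib[symmetric]
          proof (intro prod.cong refl)
            fix i assume "i \<in> {..<2*N}"
            hence "k * m * u i > 0" using u km by simp
            hence "k * m * u i + 1 > 0" "t < k * m * u i + 1" using True by auto
            from factor_id[OF this, of mu]
            show "(1 / (k * m * u i + 1)) powr mu * (1 - xx u i * t) powr (- mu) = (1 + k * m * u i - t) powr (- mu)"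
              unfolding xx_def by (simp add: add.commute)
          qed
          have i1: "indicator {0..1} t = (1::ennreal)" using True by simp
          have "ennreal (Pp u) * ennreal (ph t * (\<Prod>j<2*N. (1 - xx u j * t) powr (- mu)))
              = ennreal (Pp u * (ph t * (\<Prod>j<2*N. (1 - xx u j * t) powr (- mu))))"
            by (rule ennreal_mult'[OF Ppn, symmetric])
          also have "Pp u * (ph t * (\<Prod>j<2*N. (1 - xx u j * t) powr (- mu))) = ph t * (\<Prod>i<2*N. (1 + k * m * u i - t) powr (- mu))"
            by (metis pe mult.left_commute)
          finally show ?thesis unfolding i1 by simp
        qed simp
      qed
      finally show ?thesis .
    qed
    have "ennreal (B * (Pp lam * FD lam)) \<le> ennreal (B * (Pp lamhat * FD lamhat))"
      unfolding rep[OF lampos] rep[OF lhpos]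
    proof (intro nn_integral_mono)
      fix t :: real
      show "ennreal (ph t * (\<Prod>i<2*N. (1 + k * m * lam i - t) powr (- mu))) * indicator {0..1} t
          \<le> ennreal (ph t * (\<Prod>i<2*N. (1 + k * m * lamhat i - t) powr (- mu))) * indicator {0..1} t"
      proof (cases "t \<in> {0..1}")
        case True
        have "ph t \<ge> 0" unfolding ph_def by simp
        hence "ph t * (\<Prod>i<2*N. (1 + k * m * lam i - t) powr (- mu)) \<le> ph t * (\<Prod>i<2*N. (1 + k * m * lamhat i - t) powr (- mu))"
          using pw[of t] True by (intro mult_left_mono) auto
        thus ?thesis using True by (simp add: ennreal_leI)
      qed simp
    qed
    moreover have "B * (Pp lamhat * FD lamhat) \<ge> 0"
    proof -
      have c0: "2 * real N * mu + 1 > 0" using Nmu by linarith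
      have x: "\<forall>j<2*N. 0 \<le> xx lamhat j"
        using lhpos km unfolding xx_def by (auto intro: add_nonneg_nonneg)
      have "FD lamhat \<ge> 0" unfolding FD_def a_def[symmetric]
        by (rule FD_nonneg) (use a mu x c0 in auto)
      moreover have "Pp lamhat \<ge> 0" unfolding Pp_def by (intro prod_nonneg) auto
      ultimately show ?thesis using Bpos by simp
    qed
    ultimately have "B * (Pp lam * FD lam) \<le> B * (Pp lamhat * FD lamhat)" by simp
    thus ?thesis using Bpos by simp
  qed
  show ?thesis unfolding k_def[symmetric] cov using main G by (simp add: mult_left_mono)
qed


end
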